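(* Let $\boldsymbol{\beta}=(\beta_1,\dots,\beta_p)$ be an alternate base and $\delta=\prod_{i=1}^p\beta_i$. Suppose there exists $\gamma>0$ such that every rational number in $[0,\gamma)$ has an eventually periodic $\boldsymbol{\beta}$-expansion. Then $\delta$ is an algebraic number and $\beta_i\in\mathbb{Q}(\delta)$ for $i=1,\dots,p$.
   Context: An alternate base is a $p$-tuple $\boldsymbol{\beta}=(\beta_1,\dots,\beta_p)$ of reals $\beta_i>1$, identified with the purely periodic sequence $(\beta_k)_{k\ge1}$, $\beta_{k+p}=\beta_k$. For $x\in[0,1)$ the $\boldsymbol{\beta}$-expansion $d_{\boldsymbol{\beta}}(x)=a_1a_2\cdots$ is given by the greedy algorithm $r_0=x$, $a_{k+1}=\lfloor\beta_{k+1}r_k\rfloor$, $r_{k+1}=\beta_{k+1}r_k-a_{k+1}$, so $x=\sum_{k\ge1}a_k/\prod_{i=1}^k\beta_i$. *)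

theory Defs
  imports "HOL-Analysis.Analysis" "HOL-Computational_Algebra.Polynomial"
begin

(* An alternate base is a nonempty list bs = [beta_1,...,beta_p] of reals > 1,
   extended periodically: the k-th base (0-indexed) is bs ! (k mod p). *)
definition alt_base :: "real list \<Rightarrow> bool" where
  "alt_base bs \<longleftrightarrow> bs \<noteq> [] \<and> (\<forall>b\<in>set bs. b > 1)"

fun alt_rem :: "real list \<Rightarrow> real \<Rightarrow> nat \<Rightarrow> real" where
  "alt_rem bs x 0 = x"
| "alt_rem bs x (Suc k) =
     bs ! (k mod length bs) * alt_rem bs x k - of_int \<lfloor>bs ! (k mod length bs) * alt_rem bs x k\<rfloor>"

(* alt_digit bs x k = a_{k+1} = floor (beta_{k+1} * r_k) *)
definition alt_digit :: "real list \<Rightarrow> real \<Rightarrow> nat \<Rightarrow> int" where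
  "alt_digit bs x k = \<lfloor>bs ! (k mod length bs) * alt_rem bs x k\<rfloor>"

definition eventually_periodic :: "(nat \<Rightarrow> 'a) \<Rightarrow> bool" where
  "eventually_periodic a \<longleftrightarrow> (\<exists>N q. q > 0 \<and> (\<forall>n\<ge>N. a (n + q) = a n))"

definition in_Q_adjoin :: "real \<Rightarrow> real \<Rightarrow> bool" where
  "in_Q_adjoin d y \<longleftrightarrow> (\<exists>P Q :: real poly. (\<forall>i. coeff P i \<in> \<rat>) \<and> (\<forall>i. coeff Q i \<in> \<rat>)
        \<and> poly Q d \<noteq> 0 \<and> y = poly P d / poly Q d)"

end

theory Submission
  imports Defs
begin


locale altb = fixes bs :: "real list" assumes ab: "alt_base bs"
begin

abbreviation "p \<equiv> length bs"
definition bb :: "nat \<Rightarrow> real" where "bb i = bs ! (i mod p)"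
definition Pr :: "nat \<Rightarrow> real" where "Pr k = (\<Prod>i<k. bb i)"
abbreviation "dl \<equiv> prod_list bs"

lemma p_pos: "p > 0" using ab unfolding alt_base_def by auto

lemma bb_gt1: "bb i > 1"
proof -
  have "i mod p < p" using p_pos by simp
  hence "bs ! (i mod p) \<in> set bs" by simp
  thus ?thesis using ab unfolding alt_base_def bb_def by auto
qed

lemma bb_per: "bb (i + p) = bb i" unfolding bb_def by simp

lemma Pr_0[simp]: "Pr 0 = 1" unfolding Pr_def by simp
lemma Pr_Suc: "Pr (Suc k) = Pr k * bb k" unfolding Pr_def by simp

lemma Pr_pos: "Pr k > 0"
  unfolding Pr_def by (rule prod_pos) (metis bb_gt1 less_trans zero_less_one)

lemma Pr_ge1: "Pr k \<ge> 1"
  unfolding Pr_def by (rule prod_ge_1) (metis bb_gt1 less_imp_le)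

lemma Pr_mono: "k \<le> m \<Longrightarrow> Pr k \<le> Pr m"
proof (induction m)
  case 0 thus ?case by simp
next
  case (Suc m)
  show ?case
  proof (cases "k = Suc m")
    case False
    hence "Pr k \<le> Pr m" using Suc by simp
    also have "\<dots> \<le> Pr (Suc m)" unfolding Pr_Suc using Pr_pos[of m] bb_gt1[of m] by simp
    finally show ?thesis .
  qed simp
qed

lemma Pr_strict: "Pr k < Pr (Suc k)"
  unfolding Pr_Suc using Pr_pos[of k] bb_gt1[of k] by simp

lemma Pr_p: "Pr p = dl"
proof -
  have "Pr p = (\<Prod>i<p. bs ! i)" unfolding Pr_def bb_def by (rule prod.cong) auto
  also have "\<dots> = dl" by (simp add: prod.list_conv_set_nth atLeast0LessThan)
  finally show ?thesis .
qed

lemma Pr_shift: "Pr (m + p) = Pr m * dl"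
proof (induction m)
  case 0 thus ?case using Pr_p by simp
next
  case (Suc m)
  have "Pr (Suc m + p) = Pr (m + p) * bb (m + p)" by (simp add: Pr_Suc)
  thus ?case using Suc by (simp add: Pr_Suc bb_per)
qed

lemma Pr_blk: "Pr (k * p + j) = dl ^ k * Pr j"
proof (induction k)
  case (Suc k)
  have "Suc k * p + j = (k * p + j) + p" by simp
  hence "Pr (Suc k * p + j) = Pr (k * p + j) * dl" using Pr_shift by metis
  thus ?case using Suc by simp
qed simp

lemma dl_gt1: "dl > 1"
proof -
  have "Pr p > Pr 0" using Pr_strict[of 0] Pr_mono[of 1 p] p_pos by simp
  thus ?thesis using Pr_p by simp
qed

lemma Pr_idx: "Pr (Suc i) = dl ^ (i div p) * Pr (Suc (i mod p))"
  using Pr_blk[of "i div p" "Suc (i mod p)"] by simp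

lemma Pr_le_dl: "j < p \<Longrightarrow> Pr (Suc j) \<le> dl"
  using Pr_mono[of "Suc j" p] Pr_p by simp

end



context altb begin

abbreviation "rr x k \<equiv> alt_rem bs x k"
abbreviation "aa x k \<equiv> alt_digit bs x k"

lemma rr_Suc: "rr x (Suc k) = bb k * rr x k - of_int \<lfloor>bb k * rr x k\<rfloor>"
  by (simp add: bb_def)

lemma aa_def': "aa x k = \<lfloor>bb k * rr x k\<rfloor>"
  by (simp add: alt_digit_def bb_def)

lemma rr_bounds:
  assumes "0 \<le> x" "x < 1"
  shows "0 \<le> rr x k \<and> rr x k < 1"
proof (cases k)
  case 0 thus ?thesis using assms by simp
next
  case (Suc m)
  thus ?thesis unfolding rr_Suc by (simp add: floor_less_cancel)
qed

lemma aa_nonneg: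
  assumes "0 \<le> x" "x < 1"
  shows "aa x k \<ge> 0"
  unfolding aa_def' using rr_bounds[OF assms, of k] bb_gt1[of k] by simp

lemma expansion:
  "x = (\<Sum>i<k. of_int (aa x i) / Pr (Suc i)) + rr x k / Pr k"
proof (induction k)
  case 0 thus ?case by simp
next
  case (Suc k)
  have "rr x (Suc k) / Pr (Suc k) = rr x k / Pr k - of_int (aa x k) / Pr (Suc k)"
    unfolding rr_Suc aa_def' Pr_Suc using Pr_pos[of k] bb_gt1[of k]
    by (simp add: field_simps)
  thus ?case using Suc by simp
qed

lemma small_rr:
  assumes "0 \<le> x" "Pr K * x < 1" "i \<le> K"
  shows "rr x i = Pr i * x"
  using assms(3)
proof (induction i)
  case 0 thus ?case by simp
next
  case (Suc i)
  have h: "rr x i = Pr i * x" using Suc by simp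
  have "Pr (Suc i) * x \<le> Pr K * x"
    using Pr_mono[OF Suc.prems] assms(1) by (simp add: mult_right_mono)
  hence "0 \<le> Pr (Suc i) * x \<and> Pr (Suc i) * x < 1" using assms Pr_pos[of "Suc i"] by simp
  hence "\<lfloor>Pr (Suc i) * x\<rfloor> = 0" by (simp add: floor_eq_iff)
  thus ?case unfolding rr_Suc h using Pr_Suc[of i] by (simp add: mult.commute mult.left_commute)
qed

lemma digit_one:
  assumes "0 \<le> x" "Pr K * x < 1" "1 \<le> Pr (Suc K) * x"
  shows "aa x K \<ge> 1"
proof -
  have "rr x K = Pr K * x" using small_rr[OF assms(1,2)] by simp
  hence "bb K * rr x K = Pr (Suc K) * x" by (simp add: Pr_Suc mult.commute mult.left_commute)
  thus ?thesis unfolding aa_def' using assms(3) by (simp add: le_floor_iff)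
qed

lemma rr_diff:
  assumes "\<forall>i. aa x (N + i) = aa x (N + L + i)" "p dvd L"
  shows "rr x (N + m) - rr x (N + L + m) = (rr x N - rr x (N + L)) * (Pr (N + m) / Pr N)"
proof (induction m)
  case 0 thus ?case using Pr_pos[of N] by simp
next
  case (Suc m)
  have bbL: "bb (N + L + m) = bb (N + m)"
    using assms(2) unfolding bb_def by (metis add.assoc add.commute mod_add_self2 dvd_def mod_mult_self2)
  have "rr x (N + Suc m) - rr x (N + L + Suc m)
      = bb (N + m) * (rr x (N + m) - rr x (N + L + m)) - (of_int (aa x (N + m)) - of_int (aa x (N + L + m)))"
    using rr_Suc[of x "N + m"] rr_Suc[of x "N + L + m"] bbL
    by (simp add: aa_def' algebra_simps)
  also have "\<dots> = bb (N + m) * (rr x (N + m) - rr x (N + L + m))" using assms(1) by simp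
  also have "\<dots> = (rr x N - rr x (N + L)) * (Pr (N + Suc m) / Pr N)"
    using Suc by (simp add: Pr_Suc)
  finally show ?case .
qed

lemma rr_periodic:
  assumes x: "0 \<le> x" "x < 1"
    and per: "\<forall>i. aa x (N + i) = aa x (N + L + i)" "p dvd L"
  shows "rr x N = rr x (N + L)"
proof (rule ccontr)
  assume ne: "rr x N \<noteq> rr x (N + L)"
  define d where "d = \<bar>rr x N - rr x (N + L)\<bar>"
  have dpos: "d > 0" using ne unfolding d_def by simp
  obtain k where k: "1 / d < dl ^ k" using real_arch_pow[OF dl_gt1] by blast
  have "Pr (N + k * p) = dl ^ k * Pr N" using Pr_blk[of k N] by (simp add: add.commute)
  hence "rr x (N + k * p) - rr x (N + L + k * p) = (rr x N - rr x (N + L)) * dl ^ k"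
    using rr_diff[OF per, of "k * p"] Pr_pos[of N] by simp
  hence "\<bar>rr x (N + k * p) - rr x (N + L + k * p)\<bar> = d * dl ^ k"
    unfolding d_def using dl_gt1 by (simp add: abs_mult)
  moreover have "\<bar>rr x (N + k * p) - rr x (N + L + k * p)\<bar> < 1"
    using rr_bounds[OF x, of "N + k * p"] rr_bounds[OF x, of "N + L + k * p"] by linarith
  moreover have "d * dl ^ k > 1" using k dpos by (simp add: field_simps)
  ultimately show False by simp
qed

end



context altb begin

lemma sum_split_lt:
  fixes N M :: nat
  assumes "N \<le> M"
  shows "(\<Sum>i<M. f i) = (\<Sum>i<N. f i) + (\<Sum>i\<in>{N..<M}. f i)"
proof -
  have "{..<M} = {..<N} \<union> {N..<M}" using assms by auto
  moreover have "sum f ({..<N} \<union> {N..<M}) = sum f {..<N} + sum f {N..<M}"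
    by (rule sum.union_disjoint) auto
  ultimately show ?thesis by simp
qed

lemma per_block:
  assumes x: "0 \<le> x" "x < 1" and ep: "eventually_periodic (aa x)"
  shows "\<exists>n q. n \<ge> n0 \<and> q > 0 \<and> rr x (n * p) = rr x ((n + q) * p)"
proof -
  obtain N0 Q where Q: "Q > 0" "\<forall>n\<ge>N0. aa x (n + Q) = aa x n"
    using ep unfolding eventually_periodic_def by blast
  have mQ: "aa x (n + m * Q) = aa x n" if "n \<ge> N0" for n m
  proof (induction m)
    case (Suc m)
    have "aa x (n + Suc m * Q) = aa x ((n + m * Q) + Q)" by (simp add: algebra_simps)
    also have "\<dots> = aa x (n + m * Q)" using Q(2) that by simp
    finally show ?case using Suc by simp
  qed simp
  define n where "n = max n0 N0"
  have "1 \<le> p" using p_pos by linarith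
  hence "n * 1 \<le> n * p" by (rule mult_le_mono2)
  hence np: "n * p \<ge> N0" unfolding n_def by linarith
  have per: "\<forall>i. aa x (n * p + i) = aa x (n * p + Q * p + i)"
  proof
    fix i
    have "aa x (n * p + i + p * Q) = aa x (n * p + i)" using mQ[of "n * p + i" p] np by simp
    thus "aa x (n * p + i) = aa x (n * p + Q * p + i)" by (simp add: algebra_simps)
  qed
  have "rr x (n * p) = rr x (n * p + Q * p)" by (rule rr_periodic[OF x per]) simp
  hence "rr x (n * p) = rr x ((n + Q) * p)" by (simp add: algebra_simps)
  moreover have "n \<ge> n0" unfolding n_def by simp
  ultimately show ?thesis using Q(1) by blast
qed

definition uu :: "nat \<Rightarrow> real" where "uu j = 1 / Pr (Suc j)"

definition cc :: "nat \<Rightarrow> nat \<Rightarrow> nat \<Rightarrow> real" where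
  "cc n q i = (if i < n * p then 1 else dl ^ q / (dl ^ q - 1)) / dl ^ (i div p)"

lemma inv_Pr: "1 / Pr (Suc i) = uu (i mod p) / dl ^ (i div p)"
  unfolding uu_def using Pr_idx[of i] by simp

lemma representation:
  assumes q: "q > 0" and per: "rr x (n * p) = rr x ((n + q) * p)"
  shows "x = (\<Sum>i<(n + q) * p. of_int (aa x i) * uu (i mod p) * cc n q i)"
proof -
  define \<rho> where "\<rho> = rr x (n * p)"
  define S1 where "S1 = (\<Sum>i<n * p. of_int (aa x i) / Pr (Suc i))"
  define S2 where "S2 = (\<Sum>i\<in>{n * p..<(n + q) * p}. of_int (aa x i) / Pr (Suc i))"
  have P1: "Pr (n * p) = dl ^ n" using Pr_blk[of n 0] by simp
  have P2: "Pr ((n + q) * p) = dl ^ (n + q)" using Pr_blk[of "n + q" 0] by simp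
  have E1: "x = S1 + \<rho> / dl ^ n" using expansion[of x "n * p"] P1 unfolding S1_def \<rho>_def by simp
  have E2: "x = S1 + S2 + \<rho> / dl ^ (n + q)"
    using expansion[of x "(n + q) * p"] P2 per sum_split_lt[of "n * p" "(n + q) * p" "\<lambda>i. of_int (aa x i) / Pr (Suc i)"]
    unfolding S1_def S2_def \<rho>_def by simp
  have dq: "dl ^ q > 1" using dl_gt1 q by simp
  have dn: "dl ^ n > 0" using dl_gt1 by simp
  have "\<rho> / dl ^ n - \<rho> / dl ^ (n + q) = S2" using E1 E2 by simp
  moreover have "\<rho> / dl ^ (n + q) = \<rho> / dl ^ n / dl ^ q" by (simp add: power_add)
  ultimately have S2e: "S2 = \<rho> / dl ^ n - \<rho> / dl ^ n / dl ^ q" by simp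
  have gen: "A = D / (D - 1) * (A - A / D)" if "D > 1" for A D :: real
    using that by (simp add: field_simps)
  have R: "\<rho> / dl ^ n = dl ^ q / (dl ^ q - 1) * S2" unfolding S2e using gen[OF dq] .
  have "x = S1 + dl ^ q / (dl ^ q - 1) * S2" using E1 R by simp
  also have "S1 = (\<Sum>i<n * p. of_int (aa x i) * uu (i mod p) * cc n q i)"
    unfolding S1_def
  proof (rule sum.cong)
    fix i assume "i \<in> {..<n * p}"
    hence "cc n q i = 1 / dl ^ (i div p)" unfolding cc_def by simp
    moreover have "of_int (aa x i) / Pr (Suc i) = of_int (aa x i) * (1 / Pr (Suc i))" by simp
    ultimately show "of_int (aa x i) / Pr (Suc i) = of_int (aa x i) * uu (i mod p) * cc n q i"
      unfolding inv_Pr by simp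
  qed simp
  also have "dl ^ q / (dl ^ q - 1) * S2 = (\<Sum>i\<in>{n * p..<(n + q) * p}. of_int (aa x i) * uu (i mod p) * cc n q i)"
    unfolding S2_def cc_def sum_distrib_left
  proof (rule sum.cong)
    fix i assume "i \<in> {n * p..<(n + q) * p}"
    hence "\<not> i < n * p" by simp
    moreover have "of_int (aa x i) / Pr (Suc i) = of_int (aa x i) * (1 / Pr (Suc i))" by simp
    ultimately show "dl ^ q / (dl ^ q - 1) * (of_int (aa x i) / Pr (Suc i)) =
      of_int (aa x i) * uu (i mod p) * ((if i < n * p then 1 else dl ^ q / (dl ^ q - 1)) / dl ^ (i div p))"
      unfolding inv_Pr by simp
  qed simp
  finally show ?thesis using sum_split_lt[of "n * p" "(n + q) * p" "\<lambda>i. of_int (aa x i) * uu (i mod p) * cc n q i"] by simp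
qed

end



definition ratp :: "real poly \<Rightarrow> bool" where "ratp P \<longleftrightarrow> (\<forall>i. coeff P i \<in> \<rat>)"

lemma ratp_add: "ratp P \<Longrightarrow> ratp Q \<Longrightarrow> ratp (P + Q)"
  unfolding ratp_def by simp
lemma ratp_diff: "ratp P \<Longrightarrow> ratp Q \<Longrightarrow> ratp (P - Q)"
  unfolding ratp_def by simp
lemma ratp_mult: "ratp P \<Longrightarrow> ratp Q \<Longrightarrow> ratp (P * Q)"
  unfolding ratp_def coeff_mult by (auto intro!: Rats_sum Rats_mult)
lemma ratp_const: "r \<in> \<rat> \<Longrightarrow> ratp [:r:]"
  unfolding ratp_def by (simp add: coeff_pCons split: nat.split)
lemma ratp_X: "ratp [:0, 1:]"
  unfolding ratp_def by (simp add: coeff_pCons split: nat.split)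
lemma ratp_prod: "(\<And>j. j \<in> A \<Longrightarrow> ratp (f j)) \<Longrightarrow> ratp (\<Prod>j\<in>A. f j)"
proof (induction A rule: infinite_finite_induct)
  case (infinite A) thus ?case using ratp_const[of 1] by (simp add: one_pCons)
next
  case empty thus ?case using ratp_const[of 1] by (simp add: one_pCons)
next
  case (insert x F) thus ?case by (simp add: ratp_mult)
qed

abbreviation "KK d y \<equiv> in_Q_adjoin d y"

lemma KK_rat: "r \<in> \<rat> \<Longrightarrow> KK d r"
  unfolding in_Q_adjoin_def
  by (rule exI[of _ "[:r:]"], rule exI[of _ 1]) (use ratp_const[of r] ratp_const[of 1] in \<open>auto simp: ratp_def one_pCons\<close>)

lemma KK_d: "KK d d"
  unfolding in_Q_adjoin_def
  by (rule exI[of _ "[:0,1:]"], rule exI[of _ 1]) (use ratp_X ratp_const[of 1] in \<open>auto simp: ratp_def one_pCons\<close>)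

lemma KK_add: assumes "KK d a" "KK d b" shows "KK d (a + b)"
proof -
  obtain P Q where a: "ratp P" "ratp Q" "poly Q d \<noteq> 0" "a = poly P d / poly Q d"
    using assms(1) unfolding in_Q_adjoin_def ratp_def by blast
  obtain P' Q' where b: "ratp P'" "ratp Q'" "poly Q' d \<noteq> 0" "b = poly P' d / poly Q' d"
    using assms(2) unfolding in_Q_adjoin_def ratp_def by blast
  have "ratp (P * Q' + P' * Q)" "ratp (Q * Q')" using a b by (auto intro: ratp_add ratp_mult)
  moreover have "poly (Q * Q') d \<noteq> 0" using a b by simp
  moreover have "a + b = poly (P * Q' + P' * Q) d / poly (Q * Q') d"
    unfolding a(4) b(4) using a(3) b(3) by (simp add: field_simps)
  ultimately show ?thesis unfolding in_Q_adjoin_def ratp_def by blast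
qed

lemma KK_mult: assumes "KK d a" "KK d b" shows "KK d (a * b)"
proof -
  obtain P Q where a: "ratp P" "ratp Q" "poly Q d \<noteq> 0" "a = poly P d / poly Q d"
    using assms(1) unfolding in_Q_adjoin_def ratp_def by blast
  obtain P' Q' where b: "ratp P'" "ratp Q'" "poly Q' d \<noteq> 0" "b = poly P' d / poly Q' d"
    using assms(2) unfolding in_Q_adjoin_def ratp_def by blast
  have "ratp (P * P')" "ratp (Q * Q')" using a b by (auto intro: ratp_mult)
  moreover have "poly (Q * Q') d \<noteq> 0" using a b by simp
  moreover have "a * b = poly (P * P') d / poly (Q * Q') d"
    unfolding a(4) b(4) using a(3) b(3) by (simp add: field_simps)
  ultimately show ?thesis unfolding in_Q_adjoin_def ratp_def by blast
qed

lemma KK_inv: assumes "KK d a" shows "KK d (1 / a)"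
proof (cases "a = 0")
  case True thus ?thesis using KK_rat[of 0] by simp
next
  case False
  obtain P Q where a: "ratp P" "ratp Q" "poly Q d \<noteq> 0" "a = poly P d / poly Q d"
    using assms(1) unfolding in_Q_adjoin_def ratp_def by blast
  have "poly P d \<noteq> 0" using a False by simp
  moreover have "1 / a = poly Q d / poly P d" using a by simp
  ultimately show ?thesis using a unfolding in_Q_adjoin_def ratp_def by blast
qed

lemma KK_minus: assumes "KK d a" shows "KK d (- a)"
  using KK_mult[OF KK_rat[of "-1"] assms] by simp

lemma KK_diff: "KK d a \<Longrightarrow> KK d b \<Longrightarrow> KK d (a - b)"
  using KK_add[of d a "- b"] KK_minus[of d b] by simp

lemma KK_div: "KK d a \<Longrightarrow> KK d b \<Longrightarrow> KK d (a / b)"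
  using KK_mult[of d a "1 / b"] KK_inv[of d b] by simp

lemma KK_sum: "(\<And>j. j \<in> A \<Longrightarrow> KK d (f j)) \<Longrightarrow> KK d (\<Sum>j\<in>A. f j)"
proof (induction A rule: infinite_finite_induct)
  case (infinite A) thus ?case using KK_rat[of 0] by simp
next
  case empty thus ?case using KK_rat[of 0] by simp
next
  case (insert x F) thus ?case by (simp add: KK_add)
qed

lemma KK_pow: "KK d a \<Longrightarrow> KK d (a ^ n)"
  by (induction n) (auto intro: KK_mult KK_rat)

lemma KK_int: "KK d (of_int z)"
  by (rule KK_rat) simp




lemma sum_remove_last:
  fixes f :: "nat \<Rightarrow> real"
  assumes "i < n"
  shows "(\<Sum>j\<in>{..<Suc n} - {i}. f j) = (\<Sum>j\<in>{..<n} - {i}. f j) + f n"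
proof -
  have "{..<Suc n} - {i} = insert n ({..<n} - {i})" using assms by auto
  thus ?thesis by simp
qed

lemma dd_solve:
  fixes M :: "nat \<Rightarrow> nat \<Rightarrow> real" and u :: "nat \<Rightarrow> real"
  assumes "\<forall>i<n. \<forall>j<n. KK d (M i j)"
    and "\<forall>i<n. KK d (\<Sum>j<n. M i j * u j)"
    and "\<forall>i<n. (\<Sum>j\<in>{..<n} - {i}. \<bar>M i j\<bar>) < \<bar>M i i\<bar>"
  shows "\<forall>i<n. KK d (u i)"
  using assms
proof (induction n arbitrary: M)
  case 0 thus ?case by simp
next
  case (Suc n)
  note ent = Suc.prems(1) and rhs = Suc.prems(2) and dom = Suc.prems(3)
  define b where "b i = (\<Sum>j<Suc n. M i j * u j)" for i
  have domn: "(\<Sum>j<n. \<bar>M n j\<bar>) < \<bar>M n n\<bar>"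
  proof -
    have "{..<Suc n} - {n} = {..<n}" by auto
    thus ?thesis using dom[rule_format, of n] by simp
  qed
  moreover have "(\<Sum>j<n. \<bar>M n j\<bar>) \<ge> 0" by (rule sum_nonneg) simp
  ultimately have "\<bar>M n n\<bar> > 0" by linarith
  hence Mnn: "M n n \<noteq> 0" by simp
  define M' where "M' i j = M i j - M i n * M n j / M n n" for i j
  have ent': "\<forall>i<n. \<forall>j<n. KK d (M' i j)"
    using ent unfolding M'_def by (auto intro!: KK_diff KK_mult KK_div)
  have bsplit: "b i = (\<Sum>j<n. M i j * u j) + M i n * u n" for i
    unfolding b_def by simp
  have rhs': "\<forall>i<n. KK d (\<Sum>j<n. M' i j * u j)"
  proof (intro allI impI)
    fix i assume i: "i < n"
    have "(\<Sum>j<n. M' i j * u j) = (\<Sum>j<n. M i j * u j) - M i n / M n n * (\<Sum>j<n. M n j * u j)"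
      unfolding M'_def by (simp add: sum_subtractf sum_distrib_left algebra_simps)
    also have "\<dots> = b i - M i n / M n n * b n"
      using bsplit[of i] bsplit[of n] Mnn by (simp add: field_simps)
    finally have eq: "(\<Sum>j<n. M' i j * u j) = b i - M i n / M n n * b n" .
    have "KK d (b i - M i n / M n n * b n)"
    proof -
      have "KK d (b i)" "KK d (b n)" using rhs i unfolding b_def by auto
      moreover have "KK d (M i n)" "KK d (M n n)" using ent i by auto
      ultimately show ?thesis by (auto intro!: KK_diff KK_mult KK_div)
    qed
    thus "KK d (\<Sum>j<n. M' i j * u j)" using eq by simp
  qed
  have dom': "\<forall>i<n. (\<Sum>j\<in>{..<n} - {i}. \<bar>M' i j\<bar>) < \<bar>M' i i\<bar>"
  proof (intro allI impI)
    fix i assume i: "i < n"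
    define A where "A = (\<Sum>j\<in>{..<n} - {i}. \<bar>M i j\<bar>)"
    define B where "B = (\<Sum>j\<in>{..<n} - {i}. \<bar>M n j\<bar>)"
    define c where "c = \<bar>M i n\<bar> / \<bar>M n n\<bar>"
    have c0: "c \<ge> 0" unfolding c_def by simp
    have rowi: "A + \<bar>M i n\<bar> < \<bar>M i i\<bar>"
      using dom[rule_format, of i] i sum_remove_last[OF i, of "\<lambda>j. \<bar>M i j\<bar>"] unfolding A_def by simp
    have rown: "B + \<bar>M n i\<bar> < \<bar>M n n\<bar>"
    proof -
      have "(\<Sum>j<n. \<bar>M n j\<bar>) = B + \<bar>M n i\<bar>"
        unfolding B_def using i by (simp add: sum_diff1)
      thus ?thesis using domn by simp
    qed
    have "(\<Sum>j\<in>{..<n} - {i}. \<bar>M' i j\<bar>) \<le> (\<Sum>j\<in>{..<n} - {i}. \<bar>M i j\<bar> + c * \<bar>M n j\<bar>)"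
      by (rule sum_mono) (simp add: M'_def c_def abs_mult abs_divide
          order_trans[OF abs_triangle_ineq4])
    also have "\<dots> = A + c * B" unfolding A_def B_def by (simp add: sum.distrib sum_distrib_left)
    also have "c * B \<le> c * (\<bar>M n n\<bar> - \<bar>M n i\<bar>)" using rown c0 by (intro mult_left_mono) auto
    also have "c * (\<bar>M n n\<bar> - \<bar>M n i\<bar>) = \<bar>M i n\<bar> - c * \<bar>M n i\<bar>"
      unfolding c_def using Mnn by (simp add: field_simps)
    finally have "(\<Sum>j\<in>{..<n} - {i}. \<bar>M' i j\<bar>) \<le> A + \<bar>M i n\<bar> - c * \<bar>M n i\<bar>" by simp
    also have "\<dots> < \<bar>M i i\<bar> - c * \<bar>M n i\<bar>" using rowi by simp
    also have "\<dots> \<le> \<bar>M' i i\<bar>"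
    proof -
      have "c * \<bar>M n i\<bar> = \<bar>M i n * M n i / M n n\<bar>" unfolding c_def by (simp add: abs_mult abs_divide)
      thus ?thesis unfolding M'_def using abs_triangle_ineq2[of "M i i" "M i n * M n i / M n n"] by simp
    qed
    finally show "(\<Sum>j\<in>{..<n} - {i}. \<bar>M' i j\<bar>) < \<bar>M' i i\<bar>" .
  qed
  have IH: "\<forall>i<n. KK d (u i)" using Suc.IH[OF ent' rhs' dom'] .
  have "u n = (b n - (\<Sum>j<n. M n j * u j)) / M n n" using bsplit[of n] Mnn by simp
  moreover have "KK d (b n)" using rhs unfolding b_def by simp
  moreover have "KK d (\<Sum>j<n. M n j * u j)" using IH ent by (auto intro!: KK_sum KK_mult)
  moreover have "KK d (M n n)" using ent by simp
  ultimately have "KK d (u n)" by (auto intro!: KK_diff KK_div)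
  thus ?case using IH less_Suc_eq by auto
qed




context altb begin

lemma cc_nonneg: "q > 0 \<Longrightarrow> cc n q i \<ge> 0"
  unfolding cc_def using dl_gt1 by (auto intro!: divide_nonneg_nonneg simp: less_imp_le)

lemma cc_KK: "KK dl (cc n q i)"
proof -
  have o: "KK dl 1" by (rule KK_rat) simp
  have a: "KK dl (dl ^ q)" "KK dl (dl ^ (i div p))" by (rule KK_pow[OF KK_d])+
  have "KK dl (if i < n * p then 1 else dl ^ q / (dl ^ q - 1))"
    using o a KK_div[OF a(1) KK_diff[OF a(1) o]] by simp
  thus ?thesis unfolding cc_def using KK_div a(2) by blast
qed

lemma uu_pos: "uu j > 0" unfolding uu_def using Pr_pos by simp

lemma regroup:
  "(\<Sum>i<M. f i * uu (i mod p)) = (\<Sum>j<p. uu j * (\<Sum>i<M. if i mod p = j then f i else 0))"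
proof -
  have "(\<Sum>j<p. uu j * (\<Sum>i<M. if i mod p = j then f i else 0))
      = (\<Sum>i<M. \<Sum>j<p. if j = i mod p then uu j * f i else 0)"
    by (subst sum.swap) (auto simp: sum_distrib_left intro!: sum.cong)
  also have "\<dots> = (\<Sum>i<M. f i * uu (i mod p))"
    using p_pos by (intro sum.cong) (auto simp: sum.delta)
  finally show ?thesis by simp
qed

lemma row_exists:
  assumes g: "\<gamma> > 0"
    and H: "\<forall>x\<in>\<rat>. 0 \<le> x \<and> x < \<gamma> \<and> x < 1 \<longrightarrow> eventually_periodic (aa x)"
    and s: "s < p" and e: "\<epsilon> > 0"
  shows "\<exists>row. (\<forall>j<p. KK dl (row j) \<and> \<bar>row j - (if j = s then 1 else 0)\<bar> \<le> \<epsilon>)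
               \<and> KK dl (\<Sum>j<p. uu j * row j)"
proof -
  obtain k where k: "1 / \<gamma> < dl ^ k" using real_arch_pow[OF dl_gt1] by blast
  define K where "K = k * p + s"
  have dk: "dl ^ k > 0" using dl_gt1 by simp
  have PK: "Pr K \<ge> dl ^ k" unfolding K_def using Pr_blk[of k s] Pr_ge1[of s] dk by simp
  define \<eta> where "\<eta> = \<epsilon> / dl ^ (k + 1)"
  have eta: "\<eta> > 0" unfolding \<eta>_def using e dl_gt1 by simp
  define lo where "lo = 1 / Pr (Suc K)"
  define hi where "hi = min (1 / Pr K) (lo + \<eta>)"
  have "lo < 1 / Pr K" unfolding lo_def using Pr_strict[of K] Pr_pos[of K]
    by (simp add: frac_less2)
  hence "lo < hi" unfolding hi_def using eta by simp
  then obtain x where xQ: "x \<in> \<rat>" and xlo: "lo < x" and xhi: "x < hi"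
    using Rats_dense_in_real by blast
  have lo0: "lo > 0" unfolding lo_def using Pr_pos by simp
  have x0: "0 \<le> x" using xlo lo0 by simp
  have xK: "x < 1 / Pr K" using xhi unfolding hi_def by simp
  have "1 / Pr K \<le> 1 / dl ^ k" using PK dk by (simp add: frac_le)
  also have "1 / dl ^ k < \<gamma>" using k g dk by (simp add: field_simps)
  finally have xg: "x < \<gamma>" using xK by simp
  have "1 / Pr K \<le> 1" using Pr_ge1[of K] by simp
  hence x1: "x < 1" using xK by simp
  have ep: "eventually_periodic (aa x)" using H xQ x0 xg x1 by blast
  obtain n q where nq: "n \<ge> k + 1" "q > 0" "rr x (n * p) = rr x ((n + q) * p)"
    using per_block[OF x0 x1 ep, of "k + 1"] by blast
  define f where "f i = of_int (aa x i) * cc n q i" for i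
  define h where "h j = (\<Sum>i<(n + q) * p. if i mod p = j then f i else 0)" for j
  have xrep: "x = (\<Sum>j<p. uu j * h j)"
    using representation[OF nq(2,3)] regroup[of f "(n + q) * p"] unfolding h_def f_def
    by (simp add: algebra_simps)
  have f0: "f i \<ge> 0" for i unfolding f_def using aa_nonneg[OF x0 x1] cc_nonneg[OF nq(2)] by simp
  have h0: "h j \<ge> 0" for j unfolding h_def using f0 by (auto intro!: sum_nonneg)
  have Kmod: "K mod p = s" "K div p = k"
  proof -
    have "(s + k * p) div p = k + s div p" by (rule div_mult_self1) (use p_pos in simp)
    thus "K div p = k" unfolding K_def using s by (simp add: add.commute)
    show "K mod p = s" unfolding K_def using s by simp
  qed
  have Klt: "K < n * p"
  proof -
    have "K < (k + 1) * p" unfolding K_def using s by simp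
    also have "\<dots> \<le> n * p" using nq(1) by (rule mult_le_mono1)
    finally show ?thesis .
  qed
  have aK: "aa x K \<ge> 1"
  proof (rule digit_one[OF x0])
    show "Pr K * x < 1" using xK Pr_pos[of K] by (simp add: field_simps)
    show "1 \<le> Pr (Suc K) * x" using xlo Pr_pos[of "Suc K"] unfolding lo_def by (simp add: field_simps)
  qed
  have ccK: "cc n q K = 1 / dl ^ k" unfolding cc_def using Klt Kmod by simp
  have hs: "h s \<ge> 1 / dl ^ k"
  proof -
    have "f K \<le> h s" unfolding h_def
      using member_le_sum[of K "{..<(n + q) * p}" "\<lambda>i. if i mod p = s then f i else 0"] Klt Kmod f0
      by (simp add: algebra_simps)
    moreover have "f K \<ge> 1 / dl ^ k"
    proof -
      have "(1::real) \<le> of_int (aa x K)" using aK by simp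
      thus ?thesis unfolding f_def ccK using dk by (simp add: divide_right_mono)
    qed
    ultimately show ?thesis by simp
  qed
  define t where "t j = uu j * (h j - (if j = s then 1 / dl ^ k else 0))" for j
  have t0: "t j \<ge> 0" for j unfolding t_def using uu_pos[of j] h0[of j] hs by auto
  have "(\<Sum>j<p. t j) = (\<Sum>j<p. uu j * h j) - (\<Sum>j<p. if j = s then uu j / dl ^ k else 0)"
  proof -
    have "t j = uu j * h j - (if j = s then uu j / dl ^ k else 0)" for j
      unfolding t_def by (simp add: right_diff_distrib)
    thus ?thesis by (simp add: sum_subtractf)
  qed
  also have "\<dots> = x - uu s / dl ^ k" using xrep s by (simp add: sum.delta)
  also have "uu s / dl ^ k = lo" unfolding uu_def lo_def K_def
    using Pr_blk[of k "Suc s"] by simp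
  finally have tsum: "(\<Sum>j<p. t j) = x - lo" .
  have tb: "t j < \<eta>" if "j < p" for j
  proof -
    have "t j \<le> (\<Sum>j<p. t j)" using member_le_sum[of j "{..<p}" t] t0 that by simp
    also have "\<dots> < \<eta>" using tsum xhi unfolding hi_def by simp
    finally show ?thesis .
  qed
  define row where "row j = dl ^ k * h j" for j
  have "\<forall>j<p. KK dl (row j) \<and> \<bar>row j - (if j = s then 1 else 0)\<bar> \<le> \<epsilon>"
  proof (intro allI impI conjI)
    fix j assume j: "j < p"
    have "KK dl (if i mod p = j then of_int (aa x i) * cc n q i else 0)" for i
      using KK_mult[OF KK_int cc_KK] KK_rat[of 0] by simp
    thus "KK dl (row j)" unfolding row_def h_def f_def
      by (intro KK_mult[OF KK_pow[OF KK_d]] KK_sum)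
    have "row j - (if j = s then 1 else 0) = dl ^ k * t j / uu j"
      unfolding row_def t_def using uu_pos[of j] dk dl_gt1 by (auto simp: field_simps)
    hence "\<bar>row j - (if j = s then 1 else 0)\<bar> = dl ^ k * t j * Pr (Suc j)"
      using t0[of j] dk Pr_pos[of "Suc j"] unfolding uu_def by simp
    also have "\<dots> \<le> dl ^ k * \<eta> * dl"
      using tb[OF j] t0[of j] dk Pr_le_dl[OF j] Pr_pos[of "Suc j"] dl_gt1
      by (intro mult_mono mult_left_mono) auto
    also have "\<dots> = \<epsilon>" unfolding \<eta>_def using dl_gt1 by (simp add: field_simps)
    finally show "\<bar>row j - (if j = s then 1 else 0)\<bar> \<le> \<epsilon>" .
  qed
  moreover have "KK dl (\<Sum>j<p. uu j * row j)"
  proof -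
    have "(\<Sum>j<p. uu j * row j) = dl ^ k * x" unfolding row_def xrep
      by (simp add: sum_distrib_left algebra_simps)
    thus ?thesis using KK_mult[OF KK_pow[OF KK_d] KK_rat[OF xQ]] by simp
  qed
  ultimately show ?thesis by blast
qed

end



context altb begin

lemma uu_KK:
  assumes g: "\<gamma> > 0"
    and H: "\<forall>x\<in>\<rat>. 0 \<le> x \<and> x < \<gamma> \<and> x < 1 \<longrightarrow> eventually_periodic (aa x)"
  shows "\<forall>j<p. KK dl (uu j)"
proof -
  define \<epsilon> :: real where "\<epsilon> = 1 / (2 * p)"
  have e: "\<epsilon> > 0" unfolding \<epsilon>_def using p_pos by simp
  have "\<forall>s. \<exists>row. s < p \<longrightarrow> ((\<forall>j<p. KK dl (row j) \<and> \<bar>row j - (if j = s then 1 else 0)\<bar> \<le> \<epsilon>)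
               \<and> KK dl (\<Sum>j<p. uu j * row j))"
    using row_exists[OF g H _ e] by blast
  then obtain M where M: "\<And>s. s < p \<Longrightarrow> (\<forall>j<p. KK dl (M s j) \<and> \<bar>M s j - (if j = s then 1 else 0)\<bar> \<le> \<epsilon>)
               \<and> KK dl (\<Sum>j<p. uu j * M s j)"
    by metis
  have dom: "\<forall>i<p. (\<Sum>j\<in>{..<p} - {i}. \<bar>M i j\<bar>) < \<bar>M i i\<bar>"
  proof (intro allI impI)
    fix i assume i: "i < p"
    have "(\<Sum>j\<in>{..<p} - {i}. \<bar>M i j\<bar>) \<le> of_nat (card ({..<p} - {i})) * \<epsilon>"
      by (rule sum_bounded_above) (use M[OF i] in auto)
    also have "card ({..<p} - {i}) = p - 1" using i by simp
    also have "of_nat (p - 1) * \<epsilon> < 1 - \<epsilon>"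
    proof -
      have "1 \<le> p" using p_pos by linarith
      hence "real (p - 1) = real p - 1" by (simp add: of_nat_diff)
      hence a: "of_nat (p - 1) * \<epsilon> = (real p - 1) / (2 * real p)" unfolding \<epsilon>_def by simp
      have P: "real p > 0" using p_pos by simp
      have b: "1 - \<epsilon> = (2 * real p - 1) / (2 * real p)" unfolding \<epsilon>_def using P by (simp add: field_simps)
      have "(real p - 1) / (2 * real p) < (2 * real p - 1) / (2 * real p)"
        using P by (intro divide_strict_right_mono) auto
      thus ?thesis using a b by simp
    qed
    also have "1 - \<epsilon> \<le> \<bar>M i i\<bar>" using M[OF i] i by auto
    finally show "(\<Sum>j\<in>{..<p} - {i}. \<bar>M i j\<bar>) < \<bar>M i i\<bar>" .
  qed
  show ?thesis
  proof (rule dd_solve[OF _ _ dom])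
    show "\<forall>i<p. \<forall>j<p. KK dl (M i j)" using M by blast
    show "\<forall>i<p. KK dl (\<Sum>j<p. M i j * uu j)" using M by (simp add: mult.commute)
  qed
qed

lemma bs_KK:
  assumes "\<forall>j<p. KK dl (uu j)"
  shows "\<forall>b\<in>set bs. KK dl b"
proof
  fix b assume "b \<in> set bs"
  then obtain j where j: "j < p" "b = bs ! j" by (metis in_set_conv_nth)
  have bj: "b = bb j" unfolding bb_def using j by simp
  show "KK dl b"
  proof (cases j)
    case 0
    have "b = 1 / uu 0" unfolding bj uu_def 0 by (simp add: Pr_Suc)
    thus ?thesis using KK_inv[of dl "uu 0"] assms p_pos by simp
  next
    case (Suc j')
    have "b = uu j' / uu j" unfolding bj uu_def Suc using Pr_pos[of "Suc j'"]
      by (simp add: Pr_Suc[of "Suc j'"])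
    thus ?thesis using KK_div[of dl "uu j'" "uu j"] assms j Suc by simp
  qed
qed

end



lemma common_denom:
  fixes n :: nat and f :: "nat \<Rightarrow> real"
  assumes "\<forall>j<n. KK d (f j)"
  shows "\<exists>Q R. ratp Q \<and> poly Q d \<noteq> 0 \<and> (\<forall>j<n. ratp (R j) \<and> f j * poly Q d = poly (R j) d)"
  using assms
proof (induction n arbitrary: f)
  case 0
  show ?case
    by (rule exI[of _ 1], rule exI[of _ "\<lambda>_. 0"]) (use ratp_const[of 1] in \<open>simp add: one_pCons\<close>)
next
  case (Suc n)
  have "\<forall>j<n. KK d (f j)" using Suc.prems by simp
  then obtain Q R where QR: "ratp Q" "poly Q d \<noteq> 0" "\<forall>j<n. ratp (R j) \<and> f j * poly Q d = poly (R j) d"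
    using Suc.IH by blast
  obtain P' Q' where PQ: "ratp P'" "ratp Q'" "poly Q' d \<noteq> 0" "f n = poly P' d / poly Q' d"
    using Suc.prems unfolding in_Q_adjoin_def ratp_def by auto
  define R' where "R' j = (if j < n then R j * Q' else P' * Q)" for j
  have "ratp (Q * Q')" using QR PQ by (simp add: ratp_mult)
  moreover have "poly (Q * Q') d \<noteq> 0" using QR PQ by simp
  moreover have "\<forall>j<Suc n. ratp (R' j) \<and> f j * poly (Q * Q') d = poly (R' j) d"
  proof (intro allI impI conjI)
    fix j assume j: "j < Suc n"
    show "ratp (R' j)" unfolding R'_def using QR PQ by (auto intro: ratp_mult)
    show "f j * poly (Q * Q') d = poly (R' j) d"
    proof (cases "j < n")
      case True thus ?thesis unfolding R'_def using QR(3) by simp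
    next
      case False
      hence "j = n" using j by simp
      thus ?thesis unfolding R'_def using PQ by simp
    qed
  qed
  ultimately show ?case by blast
qed

lemma clear_denoms:
  assumes "finite S" "S \<subseteq> \<rat>"
  shows "\<exists>c::int. c > 0 \<and> (\<forall>s\<in>(S::real set). of_int c * s \<in> \<int>)"
  using assms
proof (induction S rule: finite_induct)
  case empty show ?case by (rule exI[of _ 1]) simp
next
  case (insert s S)
  then obtain c where c: "c > 0" "\<forall>t\<in>S. of_int c * t \<in> \<int>" by auto
  have "s \<in> \<rat>" using insert.prems by auto
  then obtain a b where ab: "b > 0" "s = of_int a / of_int b" by (rule Rats_cases')
  have "of_int (c * b) * s = of_int (c * a)" using ab by simp
  moreover have "of_int (c * b) * t \<in> \<int>" if "t \<in> S" for t
  proof -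
    have h: "of_int c * t \<in> \<int>" using c(2) that by blast
    have "of_int b * (of_int c * t) \<in> \<int>" using Ints_mult[OF Ints_of_int[of b] h] .
    thus ?thesis by (metis mult.assoc mult.commute of_int_mult)
  qed
  ultimately show ?case using c ab by (auto intro!: exI[of _ "c * b"])
qed

definition intp :: "real poly \<Rightarrow> bool" where "intp P \<longleftrightarrow> (\<forall>i. coeff P i \<in> \<int>)"

lemma intp_add: "intp P \<Longrightarrow> intp Q \<Longrightarrow> intp (P + Q)" unfolding intp_def by simp
lemma intp_diff: "intp P \<Longrightarrow> intp Q \<Longrightarrow> intp (P - Q)" unfolding intp_def by simp
lemma intp_mult: "intp P \<Longrightarrow> intp Q \<Longrightarrow> intp (P * Q)"
  unfolding intp_def coeff_mult by (auto intro!: Ints_sum Ints_mult)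
lemma intp_smult: "intp P \<Longrightarrow> intp (smult (of_int z) P)" unfolding intp_def by simp
lemma intp_monom: "intp (monom 1 k)" unfolding intp_def by simp
lemma intp_one: "intp 1" using intp_monom[of 0] by (simp add: one_poly_eq_simps)
lemma intp_sum: "(\<And>j. j \<in> A \<Longrightarrow> intp (f j)) \<Longrightarrow> intp (\<Sum>j\<in>A. f j)"
proof (induction A rule: infinite_finite_induct)
  case (insert x F) thus ?case by (simp add: intp_add)
qed (auto simp: intp_def)

lemma clear_poly_denoms:
  fixes n :: nat
  assumes "ratp Q" "\<forall>j<n. ratp (R j)"
  shows "\<exists>c::int. c > 0 \<and> intp (smult (of_int c) Q) \<and> (\<forall>j<n. intp (smult (of_int c) (R j)))"
proof -
  define S where "S = coeff Q ` {..degree Q} \<union> (\<Union>j<n. coeff (R j) ` {..degree (R j)})"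
  have "finite S" unfolding S_def by (intro finite_UnI finite_UN_I) auto
  moreover have "S \<subseteq> \<rat>" unfolding S_def using assms unfolding ratp_def by auto
  ultimately obtain c :: int where c: "c > 0" "\<forall>s\<in>S. of_int c * s \<in> \<int>" using clear_denoms by blast
  have "intp (smult (of_int c) Q)" unfolding intp_def
  proof
    fix i show "coeff (smult (of_int c) Q) i \<in> \<int>"
    proof (cases "i \<le> degree Q")
      case True thus ?thesis using c(2) unfolding S_def by auto
    next
      case False thus ?thesis by (simp add: coeff_eq_0)
    qed
  qed
  moreover have "\<forall>j<n. intp (smult (of_int c) (R j))" unfolding intp_def
  proof (intro allI impI)
    fix j i assume j: "j < n"
    show "coeff (smult (of_int c) (R j)) i \<in> \<int>"
    proof (cases "i \<le> degree (R j)")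
      case True thus ?thesis using c(2) j unfolding S_def by auto
    next
      case False thus ?thesis by (simp add: coeff_eq_0)
    qed
  qed
  ultimately show ?thesis using c(1) by blast
qed




context altb begin

lemma W_eval:
  assumes q: "q > 0" and i: "i < (n + q) * p"
  shows "cc n q i * ((dl ^ q - 1) * dl ^ (n + q)) =
    poly (if i < n * p then (monom 1 q - 1) * monom 1 (n + q - i div p) else monom 1 (2 * q + n - i div p)) dl"
proof -
  have idp: "i div p < n + q" using i p_pos by (simp add: div_less_iff_less_mult)
  have dq: "dl ^ q - 1 \<noteq> 0" using one_less_power[OF dl_gt1 q] by simp
  have d0: "dl \<noteq> 0" using dl_gt1 by simp
  show ?thesis
  proof (cases "i < n * p")
    case True
    have "dl ^ (n + q) = dl ^ (n + q - i div p) * dl ^ (i div p)"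
      using idp by (simp flip: power_add)
    thus ?thesis using True d0 unfolding cc_def by (simp add: poly_monom field_simps)
  next
    case False
    have e: "(2 * q + n - i div p) + i div p = q + (n + q)" using idp by simp
    have "dl ^ (2 * q + n - i div p) * dl ^ (i div p) = dl ^ q * dl ^ (n + q)"
      by (metis e power_add)
    thus ?thesis using False d0 dq unfolding cc_def by (simp add: poly_monom field_simps)
  qed
qed

lemma dl_algebraic:
  assumes g: "\<gamma> > 0"
    and H: "\<forall>x\<in>\<rat>. 0 \<le> x \<and> x < \<gamma> \<and> x < 1 \<longrightarrow> eventually_periodic (aa x)"
    and uK: "\<forall>j<p. KK dl (uu j)"
  shows "algebraic dl"
proof -
  obtain Q R where QR: "ratp Q" "poly Q dl \<noteq> 0" "\<forall>j<p. ratp (R j) \<and> uu j * poly Q dl = poly (R j) dl"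
    using common_denom[OF uK] by blast
  obtain c :: int where c: "c > 0" "intp (smult (of_int c) Q)" "\<forall>j<p. intp (smult (of_int c) (R j))"
    using clear_poly_denoms[OF QR(1), of p R] QR(3) by blast
  have Qnz: "Q \<noteq> 0" using QR(2) by auto
  define j0 where "j0 = (LEAST j. coeff Q j \<noteq> 0)"
  have j0: "coeff Q j0 \<noteq> 0" unfolding j0_def
    by (rule LeastI_ex) (use Qnz in \<open>metis leading_coeff_0_iff\<close>)
  have below: "coeff Q j = 0" if "j < j0" for j using not_less_Least[of j "\<lambda>j. coeff Q j \<noteq> 0"] that
    unfolding j0_def by blast
  define w where "w = of_int c * coeff Q j0"
  have wZ: "w \<in> \<int>" using c(2) unfolding w_def intp_def by (metis coeff_smult)
  have w0: "w \<noteq> 0" unfolding w_def using c(1) j0 by simp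
  obtain Nd :: nat where Nd: "real Nd > \<bar>w\<bar> + 1 / \<gamma> + 1" using reals_Archimedean2 by blast
  have Ndpos: "real Nd > 0" using Nd g by (smt (verit) divide_pos_pos abs_ge_zero)
  define x where "x = 1 / real Nd"
  have xQ: "x \<in> \<rat>" unfolding x_def by simp
  have x0: "0 \<le> x" unfolding x_def by simp
  have x1: "x < 1" unfolding x_def using Nd Ndpos
    by (smt (verit) abs_ge_zero divide_less_eq_1_pos divide_pos_pos g)
  have xg: "x < \<gamma>"
  proof -
    have "1 / \<gamma> < real Nd" using Nd by (smt (verit) abs_ge_zero)
    thus ?thesis unfolding x_def using g Ndpos by (simp add: field_simps)
  qed
  have ep: "eventually_periodic (aa x)" using H xQ x0 xg x1 by blast
  obtain n q where nq: "q > 0" "rr x (n * p) = rr x ((n + q) * p)"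
    using per_block[OF x0 x1 ep, of 0] by blast
  define W :: "nat \<Rightarrow> real poly" where "W i = (if i < n * p then (monom 1 q - 1) * monom 1 (n + q - i div p)
      else monom 1 (2 * q + n - i div p))" for i
  define G where "G = (\<Sum>i<(n + q) * p. smult (of_int (aa x i)) (smult (of_int c) (R (i mod p)) * W i))"
  define F0 where "F0 = (monom 1 q - 1) * monom 1 (n + q) * smult (of_int c) Q"
  define Phi where "Phi = F0 - smult (of_nat Nd) G"
  have Wint: "intp (W i)" for i unfolding W_def
    by (auto intro!: intp_mult intp_diff intp_monom intp_one)
  have Gint: "intp G" unfolding G_def
  proof (rule intp_sum)
    fix i assume "i \<in> {..<(n + q) * p}"
    have im: "i mod p < p" using p_pos by simp
    show "intp (smult (of_int (aa x i)) (smult (of_int c) (R (i mod p)) * W i))"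
      by (rule intp_smult, rule intp_mult) (use c(3) Wint im in auto)
  qed
  have F0int: "intp F0" unfolding F0_def using c(2) by (intro intp_mult intp_diff intp_monom intp_one)
  have Phiint: "intp Phi" unfolding Phi_def
    using intp_smult[OF Gint, of "int Nd"] F0int by (intro intp_diff) auto
  define D where "D = (dl ^ q - 1) * dl ^ (n + q)"
  have polyG: "poly G dl = of_int c * poly Q dl * D * x"
  proof -
    have "poly G dl = (\<Sum>i<(n + q) * p. of_int c * poly Q dl * (of_int (aa x i) * uu (i mod p) * cc n q i * D))"
      unfolding G_def poly_sum
    proof (rule sum.cong)
      fix i assume i: "i \<in> {..<(n + q) * p}"
      have im: "i mod p < p" using p_pos by simp
      have "poly (W i) dl = cc n q i * D" unfolding W_def D_def using W_eval[OF nq(1)] i by simp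
      show "poly (smult (of_int (aa x i)) (smult (of_int c) (R (i mod p)) * W i)) dl =
          of_int c * poly Q dl * (of_int (aa x i) * uu (i mod p) * cc n q i * D)"
      proof -
        have "poly (R (i mod p)) dl = uu (i mod p) * poly Q dl" using QR(3) im by simp
        thus ?thesis using \<open>poly (W i) dl = cc n q i * D\<close> by (simp add: algebra_simps)
      qed
    qed simp
    also have "\<dots> = of_int c * poly Q dl * D * (\<Sum>i<(n + q) * p. of_int (aa x i) * uu (i mod p) * cc n q i)"
      by (simp add: sum_distrib_left sum_distrib_right algebra_simps)
    also have "\<dots> = of_int c * poly Q dl * D * x" using representation[OF nq] by simp
    finally show ?thesis .
  qed
  have polyF0: "poly F0 dl = of_int c * poly Q dl * D" unfolding F0_def D_def by (simp add: poly_monom)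
  have root: "poly Phi dl = 0" unfolding Phi_def using polyG polyF0 Ndpos unfolding x_def by simp
  have cF0: "coeff F0 (n + q + j0) = - w"
  proof -
    have "F0 = monom 1 (n + q + q) * smult (of_int c) Q - monom 1 (n + q) * smult (of_int c) Q"
      unfolding F0_def by (simp add: algebra_simps mult_monom)
    moreover have "coeff (monom 1 (n + q + q) * smult (of_int c) Q) (n + q + j0) = 0"
      unfolding coeff_monom_mult using below[of "n + q + j0 - (n + q + q)"] nq(1) by auto
    moreover have "coeff (monom 1 (n + q) * smult (of_int c) Q) (n + q + j0) = w"
      unfolding coeff_monom_mult w_def by simp
    ultimately show ?thesis by simp
  qed
  obtain z where z: "z \<in> \<int>" "coeff G (n + q + j0) = z" using Gint unfolding intp_def by blast
  have cPhi: "coeff Phi (n + q + j0) = - w - real Nd * z" unfolding Phi_def using cF0 z by simp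
  have "Phi \<noteq> 0"
  proof
    assume "Phi = 0"
    hence e: "w = - real Nd * z" using cPhi by simp
    show False
    proof (cases "z = 0")
      case True thus False using e w0 by simp
    next
      case False
      hence "\<bar>z\<bar> \<ge> 1" using z(1) by (metis Ints_nonzero_abs_ge1)
      hence "\<bar>w\<bar> \<ge> real Nd" using e Ndpos by (simp add: abs_mult)
      thus False using Nd g by (smt (verit) divide_pos_pos)
    qed
  qed
  thus ?thesis using Phiint root unfolding intp_def by (intro algebraicI) auto
qed

end

theorem lemma2:
  fixes bs :: "real list" and \<gamma> :: real
  assumes "alt_base bs"
    and "\<gamma> > 0"
    and "\<forall>x\<in>\<rat>. 0 \<le> x \<and> x < \<gamma> \<and> x < 1 \<longrightarrow> eventually_periodic (alt_digit bs x)"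
  shows "algebraic (prod_list bs) \<and> (\<forall>b\<in>set bs. in_Q_adjoin (prod_list bs) b)"
proof -
  interpret altb bs by standard (rule assms(1))
  have uK: "\<forall>j<length bs. in_Q_adjoin (prod_list bs) (uu j)" using uu_KK[OF assms(2) assms(3)] .
  show ?thesis using dl_algebraic[OF assms(2,3) uK] bs_KK[OF uK] by simp
qed

end
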